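(* Let $V$ be an $n$-dimensional vector space over $\mathbb R$ or $\mathbb C$ and let $K_1,\dots,K_n\in\mathrm{gl}(V)$ be pairwise commuting operators such that there exists $\xi\in V$ with $K_1\xi,\dots,K_n\xi$ linearly independent. Then $\mathfrak A=\operatorname{Span}(K_1,\dots,K_n)$ coincides with its centraliser $\mathcal C(\mathfrak A)=\{B\in\mathrm{gl}(V)\mid BA=AB\ \text{for all } A\in\mathfrak A\}$; consequently $\mathfrak A$ is a unital commutative associative subalgebra of $\mathrm{gl}(V)$. *)

theory Defs
  imports "HOL-Analysis.Analysis"
begin

text \<open>Operators on V = 'a^'n (dimension CARD('n)) are matrices 'a^'n^'n,
  composition is matrix product.\<close>

definition mat_scale :: "'a::field \<Rightarrow> 'a^'n^'m \<Rightarrow> 'a^'n^'m" where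
  "mat_scale c M = (\<chi> i j. c * M$i$j)"

definition op_span :: "('k::finite \<Rightarrow> 'a::field^'n^'n) \<Rightarrow> ('a^'n^'n) set" where
  "op_span K = {(\<Sum>k\<in>UNIV. mat_scale (c k) (K k)) | c. True}"

definition centraliser :: "('a::field^'n^'n) set \<Rightarrow> ('a^'n^'n) set" where
  "centraliser A = {B. \<forall>X\<in>A. B ** X = X ** B}"

definition lin_indep_family :: "('k::finite \<Rightarrow> 'a::field^'n) \<Rightarrow> bool" where
  "lin_indep_family v \<longleftrightarrow> (\<forall>c. (\<Sum>k\<in>UNIV. c k *s v k) = 0 \<longrightarrow> (\<forall>k. c k = 0))"

end

theory Submission
  imports Defs
begin

lemma ms_lmul: "mat_scale c (A::'a::field^'n^'n) ** Y = mat_scale c (A ** Y)"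
  by (simp add: mat_scale_def matrix_matrix_mult_def vec_eq_iff sum_distrib_left mult.assoc)

lemma ms_rmul: "(Y::'a::field^'n^'n) ** mat_scale c A = mat_scale c (Y ** A)"
  by (simp add: mat_scale_def matrix_matrix_mult_def vec_eq_iff sum_distrib_left mult.left_commute)

lemma ms_vec: "mat_scale c (A::'a::field^'n^'n) *v x = c *s (A *v x)"
  by (simp add: mat_scale_def matrix_vector_mult_def vec_eq_iff sum_distrib_left mult.assoc)

lemma madd_r: "((A::'a::field^'n^'n) + B) ** C = A ** C + B ** C"
  by (simp add: matrix_matrix_mult_def vec_eq_iff distrib_right sum.distrib)

lemma msub_r: "((A::'a::field^'n^'n) - B) ** C = A ** C - B ** C"
  by (simp add: matrix_matrix_mult_def vec_eq_iff left_diff_distrib sum_subtractf)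

lemma msub_l: "(C::'a::field^'n^'n) ** (A - B) = C ** A - C ** B"
  by (simp add: matrix_matrix_mult_def vec_eq_iff right_diff_distrib sum_subtractf)

lemma mzero_l: "(0::'a::field^'n^'n) ** C = 0"
  by (simp add: matrix_matrix_mult_def vec_eq_iff)

lemma mzero_r: "(C::'a::field^'n^'n) ** 0 = 0"
  by (simp add: matrix_matrix_mult_def vec_eq_iff)

lemma sum_lmul: "finite S \<Longrightarrow> (\<Sum>k\<in>S. (F k::'a::field^'n^'n)) ** (Y::'a::field^'n^'n) = (\<Sum>k\<in>S. F k ** Y)"
proof (induction S rule: finite_induct)
  case empty
  then show ?case by (simp add: mzero_l)
next
  case (insert x S)
  have "(\<Sum>k\<in>insert x S. F k) ** Y = (F x + (\<Sum>k\<in>S. F k)) ** Y"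
    using insert by simp
  also have "\<dots> = F x ** Y + (\<Sum>k\<in>S. F k) ** Y" by (rule madd_r)
  finally show ?case using insert by simp
qed

lemma sum_rmul: "finite S \<Longrightarrow> (Y::'a::field^'n^'n) ** (\<Sum>k\<in>S. F k) = (\<Sum>k\<in>S. Y ** F k)"
  by (induction S rule: finite_induct) (auto simp: matrix_add_ldistrib mzero_r)

lemma sum_vec: "finite S \<Longrightarrow> (\<Sum>k\<in>S. F k) *v (x::'a::field^'n) = (\<Sum>k\<in>S. F k *v x)"
  by (induction S rule: finite_induct) (auto simp: matrix_vector_mult_add_rdistrib)

lemma comm_span:
  fixes K :: "'k::finite \<Rightarrow> 'a::field^'n^'n"
  assumes "\<forall>k. Y ** K k = K k ** Y" and "X \<in> op_span K"
  shows "Y ** X = X ** Y"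
proof -
  obtain c where X: "X = (\<Sum>k\<in>UNIV. mat_scale (c k) (K k))"
    using assms(2) unfolding op_span_def by blast
  show ?thesis unfolding X
    by (simp add: sum_lmul sum_rmul ms_lmul ms_rmul assms(1))
qed

lemma K_in_span:
  fixes K :: "'k::finite \<Rightarrow> 'a::field^'n^'n"
  shows "K j \<in> op_span K"
proof -
  have eq: "(\<Sum>k\<in>UNIV. mat_scale (if k = j then 1 else 0) (K k)) = K j"
  proof -
    have "(\<Sum>k\<in>UNIV. mat_scale (if k = j then 1 else 0) (K k))
        = (\<Sum>k\<in>UNIV. if k = j then K k else 0)"
      by (rule sum.cong) (auto simp: mat_scale_def vec_eq_iff)
    also have "\<dots> = K j" by simp
    finally show ?thesis .
  qed
  show ?thesis unfolding op_span_def
    by (intro CollectI exI[of _ "\<lambda>k. if k = j then 1 else 0"]) (simp add: eq)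
qed

lemma main:
  fixes K :: "'n::finite \<Rightarrow> 'a::field^'n^'n"
  assumes comm: "\<forall>i j. K i ** K j = K j ** K i"
    and ind: "lin_indep_family (\<lambda>i. K i *v \<xi>)"
  shows "centraliser (op_span K) = op_span K \<and>
            mat 1 \<in> op_span K \<and>
            (\<forall>X\<in>op_span K. \<forall>Y\<in>op_span K. X ** Y \<in> op_span K \<and> X ** Y = Y ** X)"
proof -
  have commK: "X ** K j = K j ** X" if "X \<in> op_span K" for X j
    using comm_span[of "K j" K X] comm that by simp
  have sub1: "op_span K \<subseteq> centraliser (op_span K)"
  proof
    fix X assume X: "X \<in> op_span K"
    show "X \<in> centraliser (op_span K)"
      unfolding centraliser_def using comm_span[of X K] commK[OF X] by auto
  qed
  define M :: "'a^'n^'n" where "M = (\<chi> r j. (K j *v \<xi>) $ r)"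
  have colM: "column j M = K j *v \<xi>" for j
    by (simp add: M_def column_def vec_eq_iff)
  have "\<exists>B. B ** M = mat 1"
    unfolding matrix_left_invertible_independent_columns colM
    using ind unfolding lin_indep_family_def by blast
  then obtain Bi where Bi: "M ** Bi = mat 1"
    using matrix_left_right_inverse by blast
  have sub2: "centraliser (op_span K) \<subseteq> op_span K"
  proof
    fix B assume B: "B \<in> centraliser (op_span K)"
    have BK: "B ** K j = K j ** B" for j
      using B K_in_span[of K j] unfolding centraliser_def by blast
    define c where "c = Bi *v (B *v \<xi>)"
    have Mc: "M *v c = B *v \<xi>"
      unfolding c_def by (metis matrix_vector_mul_assoc Bi matrix_vector_mul_lid)
    define C where "C = (\<Sum>k\<in>UNIV. mat_scale (c $ k) (K k))"
    have Cspan: "C \<in> op_span K" unfolding C_def op_span_def by blast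
    have Cxi: "C *v \<xi> = B *v \<xi>"
    proof -
      have "C *v \<xi> = (\<Sum>k\<in>UNIV. mat_scale (c $ k) (K k) *v \<xi>)"
        unfolding C_def by (rule sum_vec) simp
      also have "\<dots> = (\<Sum>k\<in>UNIV. c $ k *s column k M)"
        by (simp add: ms_vec colM)
      also have "\<dots> = M *v c" by (simp add: matrix_mult_sum)
      finally show ?thesis using Mc by simp
    qed
    define D where "D = B - C"
    have DK: "D ** K j = K j ** D" for j
      unfolding D_def using BK[of j] commK[OF Cspan, of j]
      by (simp add: msub_l msub_r)
    have Dxi: "D *v \<xi> = 0" unfolding D_def
      by (simp add: matrix_vector_mult_diff_rdistrib Cxi)
    have DKxi: "D *v (K j *v \<xi>) = 0" for j
      by (metis DK Dxi matrix_vector_mul_assoc matrix_vector_mult_0_right)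
    have DM: "D ** M = 0"
    proof -
      have "(D ** M) $ i $ j = 0" for i j
      proof -
        have "(D ** M) $ i $ j = (D *v (K j *v \<xi>)) $ i"
          by (simp add: matrix_matrix_mult_def matrix_vector_mult_def M_def)
        then show ?thesis using DKxi by simp
      qed
      then show ?thesis by (simp add: vec_eq_iff)
    qed
    have "D = 0"
      by (metis DM Bi matrix_mul_assoc matrix_mul_rid mzero_l)
    then have "B = C" unfolding D_def by simp
    then show "B \<in> op_span K" using Cspan by simp
  qed
  have eq: "centraliser (op_span K) = op_span K" using sub1 sub2 by blast
  have one: "mat 1 \<in> op_span K"
    using sub2 unfolding centraliser_def by (auto simp: matrix_mul_lid matrix_mul_rid)
  have prod: "X ** Y \<in> op_span K \<and> X ** Y = Y ** X" if X: "X \<in> op_span K" and Y: "Y \<in> op_span K" for X Y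
  proof
    show "X ** Y = Y ** X" using sub1 X Y unfolding centraliser_def by blast
    have "(X ** Y) ** Z = Z ** (X ** Y)" if Z: "Z \<in> op_span K" for Z
    proof -
      have "X ** Z = Z ** X" "Y ** Z = Z ** Y" using sub1 X Y Z unfolding centraliser_def by blast+
      then show ?thesis by (metis matrix_mul_assoc)
    qed
    then show "X ** Y \<in> op_span K" using sub2 unfolding centraliser_def by blast
  qed
  show ?thesis using eq one prod by blast
qed

theorem lemma2p1:
  shows "(\<forall>K :: 'n::finite \<Rightarrow> real^'n^'n.
            (\<forall>i j. K i ** K j = K j ** K i) \<and> (\<exists>\<xi>. lin_indep_family (\<lambda>i. K i *v \<xi>)) \<longrightarrow>
            centraliser (op_span K) = op_span K \<and>
            mat 1 \<in> op_span K \<and>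
            (\<forall>X\<in>op_span K. \<forall>Y\<in>op_span K. X ** Y \<in> op_span K \<and> X ** Y = Y ** X))
       \<and> (\<forall>K :: 'n::finite \<Rightarrow> complex^'n^'n.
            (\<forall>i j. K i ** K j = K j ** K i) \<and> (\<exists>\<xi>. lin_indep_family (\<lambda>i. K i *v \<xi>)) \<longrightarrow>
            centraliser (op_span K) = op_span K \<and>
            mat 1 \<in> op_span K \<and>
            (\<forall>X\<in>op_span K. \<forall>Y\<in>op_span K. X ** Y \<in> op_span K \<and> X ** Y = Y ** X))"
  apply (rule conjI)
   apply (intro allI impI, elim conjE exE, erule main, assumption)
  apply (intro allI impI, elim conjE exE, erule main, assumption)
  done

end
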